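(* Let $G$ be a group acting faithfully by homeomorphisms on an infinite Hausdorff space $\mathcal{X}$, and let $U$ be an open subset of $\mathcal{X}$ such that its $G$-orbit $\{gU: g\in G\}$ is a basis of the topology of $\mathcal{X}$. Then every non-trivial normal subgroup of $G$ contains $R_U$.
   Context: For an open $U\subset\mathcal{X}$, $G_{(U)}$ denotes the subgroup of elements of $G$ acting trivially on $\mathcal{X}\setminus U$, and $R_U$ denotes the normal closure in $G$ of the derived subgroup $G_{(U)}'=[G_{(U)},G_{(U)}]$. *)

theory Defs
  imports "HOL-Analysis.Analysis" "HOL-Algebra.Algebra"
begin

definition rigid_stabilizer :: "('g, 'b) monoid_scheme \<Rightarrow> ('g \<Rightarrow> 'a \<Rightarrow> 'a) \<Rightarrow> 'a set \<Rightarrow> 'a set \<Rightarrow> 'g set"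
  where "rigid_stabilizer G \<phi> E U = {g \<in> carrier G. \<forall>x \<in> E - U. \<phi> g x = x}"

definition normal_closure :: "('g, 'b) monoid_scheme \<Rightarrow> 'g set \<Rightarrow> 'g set"
  where "normal_closure G S =
     generate G (\<Union>g \<in> carrier G. (\<lambda>h. g \<otimes>\<^bsub>G\<^esub> h \<otimes>\<^bsub>G\<^esub> inv\<^bsub>G\<^esub> g) ` S)"

definition R_sub :: "('g, 'b) monoid_scheme \<Rightarrow> ('g \<Rightarrow> 'a \<Rightarrow> 'a) \<Rightarrow> 'a set \<Rightarrow> 'a set \<Rightarrow> 'g set"
  where "R_sub G \<phi> E U = normal_closure G (derived G (rigid_stabilizer G \<phi> E U))"

end

theory Submission
  imports Defs
begin

lemma commute_faithful:
  fixes G (structure)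
  assumes "faithful_action G E \<phi>" "a \<in> carrier G" "d \<in> carrier G"
   "\<And>x. x\<in>E \<Longrightarrow> \<phi> a (\<phi> d x) = \<phi> d (\<phi> a x)"
  shows "a \<otimes>\<^bsub>G\<^esub> d = d \<otimes>\<^bsub>G\<^esub> a"
proof -
  interpret faithful_action G E \<phi> by fact
  interpret group G using group_hom group_hom.axioms(1) by auto
  have "\<phi> (a \<otimes>\<^bsub>G\<^esub> d) = \<phi> (d \<otimes>\<^bsub>G\<^esub> a)"
  proof (rule extensionalityI)
    show "\<phi> (a \<otimes>\<^bsub>G\<^esub> d) \<in> extensional E" using bij_prop0 Bij_imp_extensional assms m_closed by meson
    show "\<phi> (d \<otimes>\<^bsub>G\<^esub> a) \<in> extensional E" using bij_prop0 Bij_imp_extensional assms m_closed by meson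
    fix x assume "x \<in> E" then show "\<phi> (a \<otimes>\<^bsub>G\<^esub> d) x = \<phi> (d \<otimes>\<^bsub>G\<^esub> a) x"
      using composition_rule assms by simp
  qed
  then show ?thesis using faithful assms by (meson m_closed inj_onD)
qed

lemma maps_into:
  assumes "group_action G E \<phi>" "a \<in> carrier G" "\<forall>x\<in>E-W. \<phi> a x = x" "x \<in> E" "x \<in> W"
  shows "\<phi> a x \<in> W"
proof (rule ccontr)
  assume "\<phi> a x \<notin> W"
  have "\<phi> a x \<in> E" using group_action.element_image[OF assms(1,2,4) refl] .
  hence "\<phi> a (\<phi> a x) = \<phi> a x" using assms \<open>\<phi> a x \<notin> W\<close> by blast
  hence "\<phi> a x = x" using group_action.inj_prop[OF assms(1,2)] \<open>\<phi> a x \<in> E\<close> assms(4)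
    by (meson inj_onD)
  thus False using \<open>\<phi> a x \<notin> W\<close> assms(5) by simp
qed

lemma disjoint_commute:
  assumes "faithful_action G E \<phi>" "a \<in> carrier G" "d \<in> carrier G"
    "\<forall>x\<in>E-W. \<phi> a x = x" "\<forall>x\<in>E-W'. \<phi> d x = x" "W \<inter> W' = {}"
  shows "a \<otimes>\<^bsub>G\<^esub> d = d \<otimes>\<^bsub>G\<^esub> a"
proof (rule commute_faithful[OF assms(1-3)])
  have ga: "group_action G E \<phi>" using assms(1) faithful_action_def by blast
  fix x assume x: "x \<in> E"
  show "\<phi> a (\<phi> d x) = \<phi> d (\<phi> a x)"
  proof (cases "x \<in> W")
    case True
    then have "\<phi> a x \<in> W" using maps_into[OF ga assms(2,4) x] by blast
    moreover have "\<phi> a x \<in> E" using group_action.element_image[OF ga assms(2) x] by blast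
    ultimately have "\<phi> d (\<phi> a x) = \<phi> a x" using assms(5,6) by blast
    moreover have "\<phi> d x = x" using True x assms(5,6) by blast
    ultimately show ?thesis by simp
  next
    case False
    show ?thesis
    proof (cases "x \<in> W'")
      case True
      then have "\<phi> d x \<in> W'" using maps_into[OF ga assms(3,5) x] by blast
      moreover have "\<phi> d x \<in> E" using group_action.element_image[OF ga assms(3) x] by blast
      ultimately have "\<phi> a (\<phi> d x) = \<phi> d x" using assms(4,6) by blast
      moreover have "\<phi> a x = x" using True x assms(4,6) by blast
      ultimately show ?thesis by simp
    next
      case False
      then show ?thesis using \<open>x \<notin> W\<close> x assms(4,5) by auto
    qed
  qed
qed


lemma (in group) cancel1: "x \<in> carrier G \<Longrightarrow> y \<in> carrier G \<Longrightarrow> x \<otimes> (inv x \<otimes> y) = y"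
  by (metis m_assoc inv_closed r_inv l_one)
lemma (in group) cancel2: "x \<in> carrier G \<Longrightarrow> y \<in> carrier G \<Longrightarrow> inv x \<otimes> (x \<otimes> y) = y"
  by (metis m_assoc inv_closed l_inv l_one)

lemma inv_rs:
  fixes G (structure)
  assumes "group_action G E \<phi>" "c \<in> rigid_stabilizer G \<phi> E U"
  shows "inv\<^bsub>G\<^esub> c \<in> rigid_stabilizer G \<phi> E U"
proof -
  interpret group G using assms(1) group_action.group_hom group_hom.axioms(1) by blast
  show ?thesis using assms group_action.orbit_sym_aux[OF assms(1)]
    unfolding rigid_stabilizer_def by auto
qed

lemma conj_rs:
  fixes G (structure)
  assumes "group_action G E \<phi>" "h \<in> carrier G" "c \<in> rigid_stabilizer G \<phi> E U"
  shows "h \<otimes>\<^bsub>G\<^esub> c \<otimes>\<^bsub>G\<^esub> inv\<^bsub>G\<^esub> h \<in> rigid_stabilizer G \<phi> E (\<phi> h ` U)"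
proof -
  interpret group G using assms(1) group_action.group_hom group_hom.axioms(1) by blast
  have c: "c \<in> carrier G" "\<forall>x\<in>E-U. \<phi> c x = x" using assms(3) unfolding rigid_stabilizer_def by auto
  have "\<phi> (h \<otimes> c \<otimes> inv h) z = z" if z: "z \<in> E" "z \<notin> \<phi> h ` U" for z
  proof -
    define w where "w = \<phi> (inv h) z"
    have wE: "w \<in> E" using group_action.element_image[OF assms(1) inv_closed[OF assms(2)] z(1)] w_def by simp
    have hw: "\<phi> h w = z"
      using group_action.orbit_sym_aux[OF assms(1) inv_closed[OF assms(2)] z(1)] w_def assms(2)
      by (simp add: inv_inv)
    have "w \<notin> U" using hw z(2) by blast
    hence cw: "\<phi> c w = w" using c wE by blast
    have "\<phi> (h \<otimes> c \<otimes> inv h) z = \<phi> h (\<phi> c (\<phi> (inv h) z))"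
    proof -
      have "\<phi> (h \<otimes> c \<otimes> inv h) z = \<phi> (h \<otimes> c) (\<phi> (inv h) z)"
        by (rule group_action.composition_rule[OF assms(1) z(1)]) (use assms(2) c(1) in auto)
      also have "\<dots> = \<phi> h (\<phi> c w)"
        unfolding w_def[symmetric]
        by (rule group_action.composition_rule[OF assms(1) wE]) (use assms(2) c(1) in auto)
      finally show ?thesis unfolding w_def .
    qed
    also have "\<dots> = z" using cw hw w_def by simp
    finally show ?thesis .
  qed
  then show ?thesis using assms(2) c(1) unfolding rigid_stabilizer_def by auto
qed

theorem lemma4p2:
  fixes G :: "('g, 'b) monoid_scheme" and T :: "'a topology" and \<phi> :: "'g \<Rightarrow> 'a \<Rightarrow> 'a"
    and U :: "'a set" and N :: "'g set"
  assumes "group G"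
    and "faithful_action G (topspace T) \<phi>"
    and "\<forall>g \<in> carrier G. homeomorphic_map T T (\<phi> g)"
    and "Hausdorff_space T"
    and "infinite (topspace T)"
    and "openin T U"
    and "openin T = arbitrary union_of (\<lambda>V. V \<in> {\<phi> g ` U | g. g \<in> carrier G})"
    and "normal N G"
    and "N \<noteq> {\<one>\<^bsub>G\<^esub>}"
  shows "R_sub G \<phi> (topspace T) U \<subseteq> N"
proof -
  define E where "E = topspace T"
  interpret G: group G by fact
  have fa: "faithful_action G E \<phi>" using assms(2) E_def by simp
  have ga: "group_action G E \<phi>" using fa faithful_action_def by blast
  interpret N: normal N G by fact
  have Nsub: "subgroup N G" by (rule N.subgroup_axioms)
  define rs where "rs = rigid_stabilizer G \<phi> E"
  obtain n where n: "n \<in> N" "n \<noteq> \<one>\<^bsub>G\<^esub>"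
    using assms(9) subgroup.one_closed[OF Nsub] by blast
  have nG: "n \<in> carrier G" using n(1) subgroup.mem_carrier[OF Nsub] by blast
  obtain x where x: "x \<in> E" "\<phi> n x \<noteq> x"
  proof (rule ccontr)
    assume "\<not> thesis"
    hence fx: "\<forall>x\<in>E. \<phi> n x = x" using that by blast
    have "\<phi> n = \<phi> \<one>\<^bsub>G\<^esub>"
    proof (rule extensionalityI)
      show "\<phi> n \<in> extensional E"
        using group_action.bij_prop0[OF ga nG] Bij_imp_extensional by blast
      show "\<phi> \<one>\<^bsub>G\<^esub> \<in> extensional E"
        using group_action.bij_prop0[OF ga G.one_closed] Bij_imp_extensional by blast
      fix y assume "y \<in> E" thus "\<phi> n y = \<phi> \<one>\<^bsub>G\<^esub> y"
        using fx group_action.id_eq_one[OF ga] by (metis restrict_apply')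
    qed
    hence "n = \<one>\<^bsub>G\<^esub>" using faithful_action.faithful[OF fa] nG G.one_closed by (meson inj_onD)
    thus False using n(2) by simp
  qed
  define y where "y = \<phi> n x"
  have yE: "y \<in> E" using group_action.element_image[OF ga nG x(1)] y_def by simp
  obtain V1 V2 where V: "openin T V1" "openin T V2" "x \<in> V1" "y \<in> V2" "disjnt V1 V2"
    using assms(4) x yE y_def unfolding Hausdorff_space_def E_def by metis
  define V where "V = V1 \<inter> {z \<in> topspace T. \<phi> n z \<in> V2}"
  have "continuous_map T T (\<phi> n)" using assms(3) nG homeomorphic_imp_continuous_map by blast
  hence "openin T {z \<in> topspace T. \<phi> n z \<in> V2}" using V(2) openin_continuous_map_preimage by blast
  hence "openin T V" using V(1) V_def by blast
  then obtain \<U> where \<U>: "\<U> \<subseteq> {\<phi> g ` U | g. g \<in> carrier G}" "\<Union>\<U> = V"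
  proof -
    have "(arbitrary union_of (\<lambda>V. V \<in> {\<phi> g ` U | g. g \<in> carrier G})) V"
      using assms(7) \<open>openin T V\<close> by simp
    then show ?thesis using that unfolding union_of_def arbitrary_def by auto
  qed
  have "x \<in> V" using V x E_def y_def V_def by auto
  then obtain B where B: "B \<in> \<U>" "x \<in> B" using \<U>(2) by blast
  then obtain g where g: "g \<in> carrier G" "B = \<phi> g ` U" using \<U>(1) by blast
  define W where "W = \<phi> g ` U"
  have WV: "W \<subseteq> V" using B g W_def \<U>(2) by blast
  have disj: "W \<inter> \<phi> n ` W = {}"
  proof -
    have "\<phi> n ` W \<subseteq> V2" using WV V_def by auto
    moreover have "W \<subseteq> V1" using WV V_def by auto
    ultimately show ?thesis using V(5) unfolding disjnt_def by blast
  qed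
  have keyW: "a \<otimes>\<^bsub>G\<^esub> b \<otimes>\<^bsub>G\<^esub> inv\<^bsub>G\<^esub> a \<otimes>\<^bsub>G\<^esub> inv\<^bsub>G\<^esub> b \<in> N"
    if a: "a \<in> rs W" and b: "b \<in> rs W" for a b
  proof -
    have aG: "a \<in> carrier G" and bG: "b \<in> carrier G" using a b unfolding rs_def rigid_stabilizer_def by auto
    define d where "d = n \<otimes>\<^bsub>G\<^esub> inv\<^bsub>G\<^esub> a \<otimes>\<^bsub>G\<^esub> inv\<^bsub>G\<^esub> n"
    have drs: "d \<in> rs (\<phi> n ` W)" unfolding d_def rs_def
      using conj_rs[OF ga nG inv_rs[OF ga]] a unfolding rs_def by blast
    have dG: "d \<in> carrier G" using drs unfolding rs_def rigid_stabilizer_def by auto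
    have comm: "b \<otimes>\<^bsub>G\<^esub> d = d \<otimes>\<^bsub>G\<^esub> b"
      using disjoint_commute[OF fa bG dG _ _ disj] b drs unfolding rs_def rigid_stabilizer_def by blast
    define m where "m = a \<otimes>\<^bsub>G\<^esub> d"
    have mG: "m \<in> carrier G" using aG dG m_def by simp
    have "m = a \<otimes>\<^bsub>G\<^esub> n \<otimes>\<^bsub>G\<^esub> inv\<^bsub>G\<^esub> a \<otimes>\<^bsub>G\<^esub> inv\<^bsub>G\<^esub> n"
      using aG nG by (simp add: m_def d_def G.m_assoc)
    hence mN: "m \<in> N" using N.inv_op_closed2[OF aG n(1)] subgroup.m_inv_closed[OF Nsub n(1)]
      subgroup.m_closed[OF Nsub] by metis
    have "b \<otimes>\<^bsub>G\<^esub> inv\<^bsub>G\<^esub> m \<otimes>\<^bsub>G\<^esub> inv\<^bsub>G\<^esub> b \<in> N"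
      using N.inv_op_closed2[OF bG subgroup.m_inv_closed[OF Nsub mN]] .
    hence "m \<otimes>\<^bsub>G\<^esub> (b \<otimes>\<^bsub>G\<^esub> inv\<^bsub>G\<^esub> m \<otimes>\<^bsub>G\<^esub> inv\<^bsub>G\<^esub> b) \<in> N"
      using mN subgroup.m_closed[OF Nsub] by blast
    moreover have "m \<otimes>\<^bsub>G\<^esub> (b \<otimes>\<^bsub>G\<^esub> inv\<^bsub>G\<^esub> m \<otimes>\<^bsub>G\<^esub> inv\<^bsub>G\<^esub> b)
        = a \<otimes>\<^bsub>G\<^esub> (d \<otimes>\<^bsub>G\<^esub> b) \<otimes>\<^bsub>G\<^esub> (inv\<^bsub>G\<^esub> d \<otimes>\<^bsub>G\<^esub> inv\<^bsub>G\<^esub> a) \<otimes>\<^bsub>G\<^esub> inv\<^bsub>G\<^esub> b"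
      using aG bG dG by (simp add: m_def G.inv_mult_group G.m_assoc)
    moreover have "\<dots> = a \<otimes>\<^bsub>G\<^esub> (b \<otimes>\<^bsub>G\<^esub> d) \<otimes>\<^bsub>G\<^esub> (inv\<^bsub>G\<^esub> d \<otimes>\<^bsub>G\<^esub> inv\<^bsub>G\<^esub> a) \<otimes>\<^bsub>G\<^esub> inv\<^bsub>G\<^esub> b"
      using comm by simp
    moreover have "\<dots> = a \<otimes>\<^bsub>G\<^esub> b \<otimes>\<^bsub>G\<^esub> inv\<^bsub>G\<^esub> a \<otimes>\<^bsub>G\<^esub> inv\<^bsub>G\<^esub> b"
      using aG bG dG by (simp add: G.m_assoc G.cancel1)
    ultimately show ?thesis by simp
  qed
  have keyU: "derived_set G (rs U) \<subseteq> N"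
  proof
    fix z assume "z \<in> derived_set G (rs U)"
    then obtain c1 c2 where c: "c1 \<in> rs U" "c2 \<in> rs U"
      and z: "z = c1 \<otimes>\<^bsub>G\<^esub> c2 \<otimes>\<^bsub>G\<^esub> inv\<^bsub>G\<^esub> c1 \<otimes>\<^bsub>G\<^esub> inv\<^bsub>G\<^esub> c2" by blast
    have cG: "c1 \<in> carrier G" "c2 \<in> carrier G" using c unfolding rs_def rigid_stabilizer_def by auto
    define a where "a = g \<otimes>\<^bsub>G\<^esub> c1 \<otimes>\<^bsub>G\<^esub> inv\<^bsub>G\<^esub> g"
    define b where "b = g \<otimes>\<^bsub>G\<^esub> c2 \<otimes>\<^bsub>G\<^esub> inv\<^bsub>G\<^esub> g"
    have "a \<in> rs W" "b \<in> rs W" using conj_rs[OF ga g(1)] c unfolding a_def b_def W_def rs_def by blast+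
    hence "a \<otimes>\<^bsub>G\<^esub> b \<otimes>\<^bsub>G\<^esub> inv\<^bsub>G\<^esub> a \<otimes>\<^bsub>G\<^esub> inv\<^bsub>G\<^esub> b \<in> N" using keyW by blast
    hence "inv\<^bsub>G\<^esub> g \<otimes>\<^bsub>G\<^esub> (a \<otimes>\<^bsub>G\<^esub> b \<otimes>\<^bsub>G\<^esub> inv\<^bsub>G\<^esub> a \<otimes>\<^bsub>G\<^esub> inv\<^bsub>G\<^esub> b) \<otimes>\<^bsub>G\<^esub> g \<in> N"
      using N.inv_op_closed1[OF g(1)] by blast
    moreover have "inv\<^bsub>G\<^esub> g \<otimes>\<^bsub>G\<^esub> (a \<otimes>\<^bsub>G\<^esub> b \<otimes>\<^bsub>G\<^esub> inv\<^bsub>G\<^esub> a \<otimes>\<^bsub>G\<^esub> inv\<^bsub>G\<^esub> b) \<otimes>\<^bsub>G\<^esub> g = z"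
      using cG g(1) by (simp add: z a_def b_def G.m_assoc G.inv_mult_group G.cancel1 G.cancel2)
    ultimately show "z \<in> N" by simp
  qed
  have rsU: "rs U \<subseteq> carrier G" unfolding rs_def rigid_stabilizer_def by auto
  have derN: "derived G (rs U) \<subseteq> N"
    unfolding derived_def using G.generate_subgroup_incl[OF keyU Nsub] .
  have "(\<Union>h \<in> carrier G. (\<lambda>k. h \<otimes>\<^bsub>G\<^esub> k \<otimes>\<^bsub>G\<^esub> inv\<^bsub>G\<^esub> h) ` derived G (rs U)) \<subseteq> N"
    using derN N.inv_op_closed2 by blast
  then show ?thesis unfolding R_sub_def normal_closure_def
    using G.generate_subgroup_incl[OF _ Nsub] E_def rs_def by simp
qed

end
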